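(* Let $X\subset\Gamma$ be finite and such that $\mathbb N\ni n\mapsto|\underline X_n\setminus\underline X_{n-1}|$ is non-increasing. Let $R\in\mathbb N$, $\rho=\lfloor R/2\rfloor$, and $\Lambda\subset\Gamma$ finite with $\overline X^R\subset\Lambda$. Define $K(t):=-\sum_{Z\subset\Lambda:\ Z\cap X\ne\emptyset,\ Z\cap(\Lambda\setminus X)\neq\emptyset}\Psi(Z,t)$. Then $$\sup_{r\in[-T,T]}\|K(r)+S(R,r)\|\le 2|\partial X|\,\|\Psi\|_\xi\,\|F\|\,\zeta(\rho).$$
   Context: Setting. $\Gamma$ is a countable set with a graph distance $d(x,y)\ge 0$ (integer-valued). $F:[0,\infty)\to(0,\infty)$ satisfies $\|F\|:=\sup_{x\in\Gamma}\sum_{y\in\Gamma}F(d(x,y))<\infty$ and $C_F:=\sup_{x,z}\sum_{y}\frac{F(d(x,y))F(d(y,z))}{F(d(x,z))}<\infty$. $\xi:[0,\infty)\to(0,\infty)$ is non-increasing, satisfies $\xi(a+b)\ge\xi(a)\xi(b)$, and $\lim_{r\to\infty}\xi(r)r^n=0$ for all $n\in\mathbb N$. Put $F_\xi(r):=F(r)\xi(r)$ and $\zeta(R):=\sum_{r\in\mathbb N,\ r\ge R+1}\xi(r)$ for $R\in\mathbb N\cup\{0\}$. Each $x\in\Gamma$ carries a finite-dimensional Hilbert space $\mathcal H_x$; for finite $\Lambda$, $\mathcal A_\Lambda=\mathcal B(\bigotimes_{x\in\Lambda}\mathcal H_x)$, embedded in $\mathcal A_{\Lambda'}$ for $\Lambda\subset\Lambda'$.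 Fix $T>0$. An interaction assigns to each finite $Z\subset\Gamma$ and $t\in[-T,T]$ a self-adjoint $\Psi(Z,t)\in\mathcal A_Z$, continuous in $t$, with $\|\Psi\|_\xi:=\sup_{x,y\in\Gamma}\frac{1}{F_\xi(d(x,y))}\sum_{Z\ni x,y}\sup_{t\in[-T,T]}\|\Psi(Z,t)\|<\infty$. Sets. For finite $X$: $\partial X:=\{x\in X: d(x,\Gamma\setminus X)=1\}$; for $R\in\mathbb N\cup\{0\}$, $\overline X^R:=\{x\in\Gamma:d(x,X)\le R\}$, $\underline X_R:=\{x\in\Gamma: d(x,\Gamma\setminus X)\le R\}$, $\partial_RX:=\overline X^R\cap\underline X_R$. Surface energy. For $R\in\mathbb N$, $\rho=\lfloor R/2\rfloor$, finite $\Lambda\supset\overline X^R$: $M_R:=\{Y\subset\partial_{\rho}X: Y\cap X\ne\emptyset,\ Y\cap(\Lambda\setminus X)\ne\emptyset\}$ and $S(R,t):=\sum_{Z\in M_R}\Psi(Z,t)$. *)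

theory Defs
  imports "HOL-Analysis.Analysis" "HOL-Library.Extended_Nat"
begin

text \<open>The graph is given by a symmetric edge relation E; the graph distance is the
length of a shortest walk. The graph is assumed connected, so distances are finite.\<close>

definition gdist :: "('a \<times> 'a) set \<Rightarrow> 'a \<Rightarrow> 'a \<Rightarrow> nat" where
  "gdist E x y = (LEAST n. (x, y) \<in> E ^^ n)"

definition connected_graph :: "('a \<times> 'a) set \<Rightarrow> bool" where
  "connected_graph E \<longleftrightarrow> sym E \<and> (\<forall>x y. \<exists>n. (x, y) \<in> E ^^ n)"

text \<open>Distance from a point to a set, with the convention d(x, empty) = infinity.\<close>

definition setdist :: "('a \<Rightarrow> 'a \<Rightarrow> nat) \<Rightarrow> 'a \<Rightarrow> 'a set \<Rightarrow> enat" where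
  "setdist d x A = (INF y\<in>A. enat (d x y))"

definition bdry :: "('a \<Rightarrow> 'a \<Rightarrow> nat) \<Rightarrow> 'a set \<Rightarrow> 'a set" where
  "bdry d X = {x\<in>X. setdist d x (- X) = 1}"

definition outerR :: "('a \<Rightarrow> 'a \<Rightarrow> nat) \<Rightarrow> 'a set \<Rightarrow> nat \<Rightarrow> 'a set" where
  "outerR d X R = {x. setdist d x X \<le> enat R}"

definition innerR :: "('a \<Rightarrow> 'a \<Rightarrow> nat) \<Rightarrow> 'a set \<Rightarrow> nat \<Rightarrow> 'a set" where
  "innerR d X R = {x. setdist d x (- X) \<le> enat R}"

definition bdryR :: "('a \<Rightarrow> 'a \<Rightarrow> nat) \<Rightarrow> 'a set \<Rightarrow> nat \<Rightarrow> 'a set" where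
  "bdryR d X R = outerR d X R \<inter> innerR d X R"

definition normF :: "(real \<Rightarrow> real) \<Rightarrow> ('a \<Rightarrow> 'a \<Rightarrow> nat) \<Rightarrow> real" where
  "normF F d = (SUP x. (\<Sum>\<^sub>\<infinity>y. F (real (d x y))))"

definition CF :: "(real \<Rightarrow> real) \<Rightarrow> ('a \<Rightarrow> 'a \<Rightarrow> nat) \<Rightarrow> real" where
  "CF F d = (SUP (x, z). (\<Sum>\<^sub>\<infinity>y. F (real (d x y)) * F (real (d y z)) / F (real (d x z))))"

definition Fxi :: "(real \<Rightarrow> real) \<Rightarrow> (real \<Rightarrow> real) \<Rightarrow> real \<Rightarrow> real" where
  "Fxi F \<xi> r = F r * \<xi> r"

definition zeta :: "(real \<Rightarrow> real) \<Rightarrow> nat \<Rightarrow> real" where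
  "zeta \<xi> R = (\<Sum>\<^sub>\<infinity>r\<in>{R+1..}. \<xi> (real r))"

definition psup :: "real \<Rightarrow> ('a set \<Rightarrow> real \<Rightarrow> 'b::real_normed_vector) \<Rightarrow> 'a set \<Rightarrow> real" where
  "psup T \<Psi> Z = (SUP t\<in>{-T..T}. norm (\<Psi> Z t))"

definition psi_sum :: "real \<Rightarrow> ('a set \<Rightarrow> real \<Rightarrow> 'b::real_normed_vector) \<Rightarrow> 'a \<Rightarrow> 'a \<Rightarrow> real" where
  "psi_sum T \<Psi> x y = (\<Sum>\<^sub>\<infinity>Z\<in>{Z. finite Z \<and> x \<in> Z \<and> y \<in> Z}. psup T \<Psi> Z)"

definition normPsi :: "real \<Rightarrow> (real \<Rightarrow> real) \<Rightarrow> (real \<Rightarrow> real) \<Rightarrow> ('a \<Rightarrow> 'a \<Rightarrow> nat)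
     \<Rightarrow> ('a set \<Rightarrow> real \<Rightarrow> 'b::real_normed_vector) \<Rightarrow> real" where
  "normPsi T F \<xi> d \<Psi> = (SUP (x, y). psi_sum T \<Psi> x y / Fxi F \<xi> (real (d x y)))"

definition MR :: "('a \<Rightarrow> 'a \<Rightarrow> nat) \<Rightarrow> 'a set \<Rightarrow> 'a set \<Rightarrow> nat \<Rightarrow> 'a set set" where
  "MR d X \<Lambda> R = {Y. Y \<subseteq> bdryR d X (R div 2) \<and> Y \<inter> X \<noteq> {} \<and> Y \<inter> (\<Lambda> - X) \<noteq> {}}"

definition S :: "('a \<Rightarrow> 'a \<Rightarrow> nat) \<Rightarrow> 'a set \<Rightarrow> 'a set \<Rightarrow> ('a set \<Rightarrow> real \<Rightarrow> 'b::real_normed_vector)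
     \<Rightarrow> nat \<Rightarrow> real \<Rightarrow> 'b" where
  "S d X \<Lambda> \<Psi> R t = (\<Sum>Z\<in>MR d X \<Lambda> R. \<Psi> Z t)"

definition K :: "'a set \<Rightarrow> 'a set \<Rightarrow> ('a set \<Rightarrow> real \<Rightarrow> 'b::real_normed_vector) \<Rightarrow> real \<Rightarrow> 'b" where
  "K X \<Lambda> \<Psi> t = - (\<Sum>Z\<in>{Z. Z \<subseteq> \<Lambda> \<and> Z \<inter> X \<noteq> {} \<and> Z \<inter> (\<Lambda> - X) \<noteq> {}}. \<Psi> Z t)"

end

theory Submission
  imports Defs
begin
lemma gd_path: "connected_graph E \<Longrightarrow> (x,y) \<in> E ^^ gdist E x y"
  unfolding gdist_def connected_graph_def by (meson LeastI_ex)

lemma gd_le: "(x,y) \<in> E ^^ n \<Longrightarrow> gdist E x y \<le> n"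
  unfolding gdist_def by (rule Least_le)

lemma gd_refl: "gdist E x x = 0"
  using gd_le[where E=E and x=x and y=x and n=0] by simp

lemma gd_zero: "connected_graph E \<Longrightarrow> gdist E x y = 0 \<Longrightarrow> x = y"
  using gd_path[of E x y] by simp

lemma gd_tri: "connected_graph E \<Longrightarrow> gdist E x z \<le> gdist E x y + gdist E y z"
  apply (rule gd_le)
  using gd_path[of E x y] gd_path[of E y z] by (auto simp: relpow_add)

lemma relpow_sym: "sym E \<Longrightarrow> (x,y) \<in> E ^^ n \<Longrightarrow> (y,x) \<in> E ^^ n"
proof (induction n arbitrary: y)
  case 0 then show ?case by simp
next
  case (Suc n)
  then obtain w where "(x,w) \<in> E ^^ n" "(w,y) \<in> E" by auto
  then have "(w,x) \<in> E ^^ n" "(y,w) \<in> E" using Suc by (auto dest: symD)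
  then have "(y,x) \<in> E ^^ (1 + n)" unfolding relpow_add by auto
  then show ?case by simp
qed

lemma gd_sym: "connected_graph E \<Longrightarrow> gdist E x y = gdist E y x"
  by (metis antisym connected_graph_def gd_le gd_path relpow_sym)

lemma gd_edge: "(u,v) \<in> E \<Longrightarrow> gdist E u v \<le> 1"
  by (rule gd_le) simp

lemma geo_aux:
  assumes "connected_graph E" "(x,z) \<in> E ^^ n" "x \<in> X" "z \<notin> X"
  shows "\<exists>u\<in>X. \<exists>v. v \<notin> X \<and> (u,v) \<in> E \<and> gdist E x u + 1 + gdist E v z \<le> n"
  using assms(2,4)
proof (induction n arbitrary: z)
  case 0 then show ?case using assms(3) by simp
next
  case (Suc n)
  then obtain w where w: "(x,w) \<in> E ^^ n" "(w,z) \<in> E" by auto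
  show ?case
  proof (cases "w \<in> X")
    case True
    then show ?thesis using w Suc.prems gd_le[OF w(1)] gd_refl[of E z] by force
  next
    case False
    from Suc.IH[OF w(1) False] obtain u v where uv: "u\<in>X" "v \<notin> X" "(u,v)\<in>E"
      "gdist E x u + 1 + gdist E v w \<le> n" by blast
    have "gdist E v z \<le> gdist E v w + 1"
      using gd_tri[OF assms(1), of v z w] gd_edge[OF w(2)] by simp
    then show ?thesis using uv by force
  qed
qed


lemma sd_le: "y \<in> A \<Longrightarrow> setdist d x A \<le> enat (d x y)"
  unfolding setdist_def by (rule INF_lower)

lemma sd_ge: "(\<And>y. y \<in> A \<Longrightarrow> k \<le> d x y) \<Longrightarrow> enat k \<le> setdist d x A"
  unfolding setdist_def by (rule INF_greatest) simp

lemma layer_eq: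
  assumes "n \<ge> 1"
  shows "innerR d X n - innerR d X (n - 1) = {x. setdist d x (-X) = enat n}"
proof -
  have "(a \<le> enat n \<and> \<not> a \<le> enat (n - 1)) \<longleftrightarrow> a = enat n" for a
    using assms by (cases a) auto
  then show ?thesis unfolding innerR_def by auto
qed

lemma dc:
  fixes p :: "'a set \<Rightarrow> real"
  assumes "finite A" "finite P1" "finite P2" "\<And>Z. Z \<in> A \<Longrightarrow> p Z \<ge> 0"
    "\<And>Z. Z \<in> A \<Longrightarrow> (\<exists>q\<in>P1. fst q \<in> Z \<and> snd q \<in> Z) \<or> (\<exists>q\<in>P2. fst q \<in> Z \<and> snd q \<in> Z)"
  shows "(\<Sum>Z\<in>A. p Z) \<le> (\<Sum>q\<in>P1. \<Sum>Z\<in>{Z\<in>A. fst q \<in> Z \<and> snd q \<in> Z}. p Z)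
            + (\<Sum>q\<in>P2. \<Sum>Z\<in>{Z\<in>A. fst q \<in> Z \<and> snd q \<in> Z}. p Z)"
proof -
  let ?c = "\<lambda>q Z. fst q \<in> Z \<and> snd q \<in> Z"
  have "(\<Sum>Z\<in>A. p Z) \<le> (\<Sum>Z\<in>A. (\<Sum>q\<in>P1. if ?c q Z then p Z else 0) + (\<Sum>q\<in>P2. if ?c q Z then p Z else 0))"
  proof (rule sum_mono)
    fix Z assume Z: "Z \<in> A"
    have n1: "(\<Sum>q\<in>P1. if ?c q Z then p Z else 0) \<ge> 0" "(\<Sum>q\<in>P2. if ?c q Z then p Z else 0) \<ge> 0"
      using assms(4)[OF Z] by (auto intro: sum_nonneg)
    from assms(5)[OF Z] show "p Z \<le> (\<Sum>q\<in>P1. if ?c q Z then p Z else 0) + (\<Sum>q\<in>P2. if ?c q Z then p Z else 0)"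
    proof
      assume "\<exists>q\<in>P1. ?c q Z"
      then obtain q where q: "q \<in> P1" "?c q Z" by blast
      have "p Z \<le> (\<Sum>q\<in>P1. if ?c q Z then p Z else 0)"
        using member_le_sum[OF q(1), of "\<lambda>q. if ?c q Z then p Z else 0"] assms(2,4) Z q(2) by auto
      then show ?thesis using n1 by linarith
    next
      assume "\<exists>q\<in>P2. ?c q Z"
      then obtain q where q: "q \<in> P2" "?c q Z" by blast
      have "p Z \<le> (\<Sum>q\<in>P2. if ?c q Z then p Z else 0)"
        using member_le_sum[OF q(1), of "\<lambda>q. if ?c q Z then p Z else 0"] assms(3,4) Z q(2) by auto
      then show ?thesis using n1 by linarith
    qed
  qed
  also have "\<dots> = (\<Sum>q\<in>P1. \<Sum>Z\<in>A. if ?c q Z then p Z else 0) + (\<Sum>q\<in>P2. \<Sum>Z\<in>A. if ?c q Z then p Z else 0)"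
    by (simp add: sum.distrib sum.swap[of _ A])
  also have "\<dots> = (\<Sum>q\<in>P1. \<Sum>Z\<in>{Z\<in>A. ?c q Z}. p Z) + (\<Sum>q\<in>P2. \<Sum>Z\<in>{Z\<in>A. ?c q Z}. p Z)"
    using assms(1) by (simp add: sum.inter_filter)
  finally show ?thesis .
qed

lemma grp:
  fixes h :: "nat \<Rightarrow> real"
  assumes "finite A" "\<And>n. n \<in> g ` A \<Longrightarrow> card {x\<in>A. g x = n} \<le> c" "\<And>n. h n \<ge> 0"
  shows "(\<Sum>x\<in>A. h (g x)) \<le> real c * (\<Sum>n\<in>g ` A. h n)"
proof -
  have "(\<Sum>x\<in>A. h (g x)) = (\<Sum>n\<in>g ` A. \<Sum>x\<in>{x. x \<in> A \<and> g x = n}. h (g x))"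
    by (rule sum.image_gen[OF assms(1)])
  also have "\<dots> = (\<Sum>n\<in>g ` A. real (card {x\<in>A. g x = n}) * h n)"
    by (rule sum.cong) auto
  also have "\<dots> \<le> (\<Sum>n\<in>g ` A. real c * h n)"
    by (rule sum_mono, rule mult_right_mono) (use assms(2,3) in auto)
  finally show ?thesis by (simp add: sum_distrib_left)
qed

lemma xi_summable:
  fixes \<xi> :: "real \<Rightarrow> real"
  assumes pos: "\<And>r. r \<ge> 0 \<Longrightarrow> \<xi> r > 0"
    and dec: "((\<lambda>r. \<xi> r * r ^ 2) \<longlongrightarrow> 0) at_top"
  shows "(\<lambda>n::nat. \<xi> (real n)) summable_on A"
proof -
  have "eventually (\<lambda>r. \<xi> r * r ^ 2 < 1) at_top"
    using order_tendstoD(2)[OF dec] by simp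
  then have ev: "eventually (\<lambda>n::nat. \<xi> (real n) * real n ^ 2 < 1) sequentially"
    using filterlim_real_sequentially by (rule eventually_compose_filterlim)
  have "eventually (\<lambda>n::nat. norm (\<xi> (real n)) \<le> inverse (real n ^ 2)) sequentially"
    using ev eventually_gt_at_top[of "0::nat"]
  proof eventually_elim
    case (elim n)
    have p: "\<xi> (real n) > 0" using pos by simp
    have "\<xi> (real n) \<le> inverse (real n ^ 2)"
      using elim by (simp add: field_simps)
    then show ?case using p by simp
  qed
  then have "summable (\<lambda>n::nat. \<xi> (real n))"
    by (rule summable_comparison_test_ev) (rule inverse_power_summable, simp)
  then have "(\<lambda>n::nat. \<xi> (real n)) summable_on UNIV"
    by (rule summable_nonneg_imp_summable_on) (simp add: less_imp_le pos)
  then show ?thesis by (rule summable_on_subset) simp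
qed

lemma psup_upper:
  fixes \<Psi> :: "'a set \<Rightarrow> real \<Rightarrow> 'b::real_normed_vector"
  assumes "continuous_on {-T..T} (\<Psi> Z)" "t \<in> {-T..T}"
  shows "norm (\<Psi> Z t) \<le> psup T \<Psi> Z"
proof -
  have "compact ((\<lambda>t. norm (\<Psi> Z t)) ` {-T..T})"
    by (rule compact_continuous_image) (auto intro: continuous_on_norm assms(1))
  then have "bdd_above ((\<lambda>t. norm (\<Psi> Z t)) ` {-T..T})"
    by (auto intro: bounded_imp_bdd_above compact_imp_bounded)
  then show ?thesis unfolding psup_def by (rule cSUP_upper[OF assms(2)])
qed

theorem mainTheorem2:
  fixes E :: "('a::countable \<times> 'a) set"
    and F \<xi> :: "real \<Rightarrow> real"
    and T :: real
    and \<Psi> :: "'a set \<Rightarrow> real \<Rightarrow> 'b::real_normed_vector"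
    and X \<Lambda> :: "'a set"
    and R :: nat
  defines "d \<equiv> gdist E"
  assumes graph: "connected_graph E"
    and F_pos: "\<And>r. r \<ge> 0 \<Longrightarrow> F r > 0"
    and F_summ: "\<And>x. (\<lambda>y. F (real (d x y))) summable_on UNIV"
    and F_bdd: "bdd_above (range (\<lambda>x. \<Sum>\<^sub>\<infinity>y. F (real (d x y))))"
    and CF_summ: "\<And>x z. (\<lambda>y. F (real (d x y)) * F (real (d y z)) / F (real (d x z))) summable_on UNIV"
    and CF_bdd: "bdd_above ((\<lambda>(x, z). \<Sum>\<^sub>\<infinity>y. F (real (d x y)) * F (real (d y z)) / F (real (d x z))) ` UNIV)"
    and xi_pos: "\<And>r. r \<ge> 0 \<Longrightarrow> \<xi> r > 0"
    and xi_mono: "\<And>a b. 0 \<le> a \<Longrightarrow> a \<le> b \<Longrightarrow> \<xi> b \<le> \<xi> a"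
    and xi_supermult: "\<And>a b. 0 \<le> a \<Longrightarrow> 0 \<le> b \<Longrightarrow> \<xi> (a + b) \<ge> \<xi> a * \<xi> b"
    and xi_decay: "\<And>n::nat. ((\<lambda>r. \<xi> r * r ^ n) \<longlongrightarrow> 0) at_top"
    and T_pos: "T > 0"
    and Psi_cont: "\<And>Z. finite Z \<Longrightarrow> continuous_on {-T..T} (\<Psi> Z)"
    and Psi_summ: "\<And>x y. (psup T \<Psi>) summable_on {Z. finite Z \<and> x \<in> Z \<and> y \<in> Z}"
    and Psi_bdd: "bdd_above ((\<lambda>(x, y). psi_sum T \<Psi> x y / Fxi F \<xi> (real (d x y))) ` UNIV)"
    and X_fin: "finite X"
    and layers: "\<And>n. n \<ge> 1 \<Longrightarrow>
        card (innerR d X (n + 1) - innerR d X n) \<le> card (innerR d X n - innerR d X (n - 1))"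
    and R_pos: "R \<ge> 1"
    and Lam_fin: "finite \<Lambda>"
    and Lam_sup: "outerR d X R \<subseteq> \<Lambda>"
  shows "(SUP r\<in>{-T..T}. norm (K X \<Lambda> \<Psi> r + S d X \<Lambda> \<Psi> R r))
           \<le> 2 * real (card (bdry d X)) * normPsi T F \<xi> d \<Psi> * normF F d * zeta \<xi> (R div 2)"
proof -
  have dtri: "\<And>x y z. d x z \<le> d x y + d y z" unfolding d_def by (rule gd_tri[OF graph])
  have dsym: "\<And>x y. d x y = d y x" unfolding d_def by (rule gd_sym[OF graph])
  have drefl: "\<And>x. d x x = 0" unfolding d_def by (rule gd_refl)
  have dzero: "\<And>x y. d x y = 0 \<Longrightarrow> x = y" unfolding d_def by (rule gd_zero[OF graph])
  define \<rho> where "\<rho> = R div 2"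
  define N where "N = normPsi T F \<xi> d \<Psi>"
  define nF where "nF = normF F d"
  define p where "p = psup T \<Psi>"
  define dd where "dd x = setdist d x (-X)" for x
  define C where "C = {Z. Z \<subseteq> \<Lambda> \<and> Z \<inter> X \<noteq> {} \<and> Z \<inter> (\<Lambda> - X) \<noteq> {}}"
  define cb where "cb = card (bdry d X)"
  have Fnn: "\<And>n::nat. F (real n) > 0" using F_pos by simp
  have xinn: "\<And>n::nat. \<xi> (real n) > 0" using xi_pos by simp
  have pnn: "\<And>Z t. finite Z \<Longrightarrow> t \<in> {-T..T} \<Longrightarrow> norm (\<Psi> Z t) \<le> p Z"
    unfolding p_def by (rule psup_upper[OF Psi_cont])
  have pnn0: "\<And>Z. finite Z \<Longrightarrow> p Z \<ge> 0"
    using pnn[of _ 0] T_pos by (meson atLeastAtMost_iff less_eq_real_def neg_le_0_iff_le norm_ge_zero order_trans)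
  have psi_nn: "\<And>a b. psi_sum T \<Psi> a b \<ge> 0"
    unfolding psi_sum_def using pnn0 unfolding p_def by (auto intro: infsum_nonneg)
  have psiN: "\<And>a b. psi_sum T \<Psi> a b \<le> N * (F (real (d a b)) * \<xi> (real (d a b)))"
  proof -
    fix a b
    have "(\<lambda>(x, y). psi_sum T \<Psi> x y / Fxi F \<xi> (real (d x y))) (a,b) \<le> N"
      unfolding N_def normPsi_def by (rule cSUP_upper[OF UNIV_I Psi_bdd])
    then have "psi_sum T \<Psi> a b / (F (real (d a b)) * \<xi> (real (d a b))) \<le> N" by (simp add: Fxi_def)
    moreover have "F (real (d a b)) * \<xi> (real (d a b)) > 0" using Fnn xinn by simp
    ultimately show "psi_sum T \<Psi> a b \<le> N * (F (real (d a b)) * \<xi> (real (d a b)))"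
      by (simp add: divide_le_eq)
  qed
  have N0: "N \<ge> 0"
    using psiN[of undefined undefined] psi_nn[of undefined undefined] Fnn xinn
    by (meson mult_pos_pos zero_le_mult_iff not_le order_trans)
  have nFb: "\<And>x (B::'a set). finite B \<Longrightarrow> (\<Sum>y\<in>B. F (real (d x y))) \<le> nF"
  proof -
    fix x and B :: "'a set" assume B: "finite B"
    have "(\<Sum>y\<in>B. F (real (d x y))) \<le> (\<Sum>\<^sub>\<infinity>y. F (real (d x y)))"
      by (rule finite_sum_le_infsum[OF F_summ B]) (auto intro: less_imp_le Fnn)
    also have "\<dots> \<le> nF" unfolding nF_def normF_def by (rule cSUP_upper[OF UNIV_I F_bdd])
    finally show "(\<Sum>y\<in>B. F (real (d x y))) \<le> nF" .
  qed
  have nF0: "nF \<ge> 0" using nFb[of "{}"] by simp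
  have xis: "(\<lambda>n::nat. \<xi> (real n)) summable_on {\<rho>+1..}"
    by (rule xi_summable[OF xi_pos xi_decay])
  have zb: "\<And>A. finite A \<Longrightarrow> A \<subseteq> {\<rho>+1..} \<Longrightarrow> (\<Sum>n\<in>A. \<xi> (real n)) \<le> zeta \<xi> \<rho>"
    unfolding zeta_def by (rule finite_sum_le_infsum[OF xis]) (auto intro: less_imp_le xinn)
  have z0: "zeta \<xi> \<rho> \<ge> 0" using zb[of "{}"] by simp
  have RHS0: "0 \<le> 2 * real cb * N * nF * zeta \<xi> \<rho>" using N0 nF0 z0 by simp
  have pw: "norm (K X \<Lambda> \<Psi> t + S d X \<Lambda> \<Psi> R t) \<le> 2 * real cb * N * nF * zeta \<xi> \<rho>"
    if t: "t \<in> {-T..T}" for t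
  proof (cases "\<Lambda> - X = {}")
    case True
    have "K X \<Lambda> \<Psi> t + S d X \<Lambda> \<Psi> R t = 0"
      unfolding K_def S_def MR_def True by simp
    then show ?thesis using RHS0 by simp
  next
    case False
    then obtain y0 where y0: "y0 \<in> \<Lambda>" "y0 \<notin> X" by blast
    define g where "g x = the_enat (dd x)" for x
    have ddg: "dd x = enat (g x) \<and> g x \<ge> 1" if x: "x \<in> X" for x
    proof -
      have "dd x \<le> enat (d x y0)" unfolding dd_def by (rule sd_le) (use y0 in simp)
      then have fin: "dd x = enat (g x)" unfolding g_def by (cases "dd x") auto
      have "enat 1 \<le> dd x" unfolding dd_def
        by (rule sd_ge) (metis ComplD dzero less_one not_le x)
      then show ?thesis using fin by simp
    qed
    have laysub: "{x. dd x = enat n} \<subseteq> X" if n: "n \<ge> 1" for n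
    proof
      fix x assume "x \<in> {x. dd x = enat n}"
      then have e: "dd x = enat n" by simp
      show "x \<in> X"
      proof (rule ccontr)
        assume "x \<notin> X"
        then have "dd x \<le> enat 0" unfolding dd_def using sd_le[of x "-X" d x] drefl by simp
        then show False using e n by simp
      qed
    qed
    have layfin: "finite {x. dd x = enat n}" if n: "n \<ge> 1" for n
      using laysub[OF n] X_fin by (rule finite_subset)
    have laycard: "card {x. dd x = enat (Suc m)} \<le> cb" for m
    proof (induction m)
      case 0
      have "bdry d X = {x. dd x = enat 1}"
        unfolding bdry_def dd_def using laysub[of 1] unfolding dd_def by (auto simp: one_enat_def)
      then show ?case unfolding cb_def by simp
    next
      case (Suc m)
      have "card (innerR d X (Suc m + 1) - innerR d X (Suc m))
             \<le> card (innerR d X (Suc m) - innerR d X (Suc m - 1))" by (rule layers) simp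
      moreover have "innerR d X (Suc m + 1) - innerR d X (Suc m) = {x. dd x = enat (Suc (Suc m))}"
        unfolding dd_def using layer_eq[of "Suc (Suc m)" d X] by simp
      moreover have "innerR d X (Suc m) - innerR d X (Suc m - 1) = {x. dd x = enat (Suc m)}"
        unfolding dd_def using layer_eq[of "Suc m" d X] by simp
      ultimately show ?case using Suc.IH by simp
    qed
    have laycard': "card {x. dd x = enat n} \<le> cb" if "n \<ge> 1" for n
      using laycard[of "n - 1"] that by simp
    define M where "M = MR d X \<Lambda> R"
    define X1 where "X1 = {z\<in>X. \<not> dd z \<le> enat \<rho>}"
    define X2 where "X2 = {z\<in>\<Lambda> - X. \<not> setdist d z X \<le> enat \<rho>}"
    have outmono: "outerR d X (R div 2) \<subseteq> outerR d X R"
      unfolding outerR_def by (auto intro: order_trans)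
    have MC: "M \<subseteq> C"
      unfolding M_def MR_def C_def bdryR_def using outmono Lam_sup by blast
    have finC: "finite C"
    proof (rule finite_subset)
      show "C \<subseteq> Pow \<Lambda>" unfolding C_def by auto
    qed (use Lam_fin in simp)
    have Cfin: "\<And>Z. Z \<in> C \<Longrightarrow> finite Z" unfolding C_def using Lam_fin finite_subset by blast
    have KS: "K X \<Lambda> \<Psi> t + S d X \<Lambda> \<Psi> R t = - (\<Sum>Z\<in>C - M. \<Psi> Z t)"
      unfolding K_def S_def M_def[symmetric] C_def[symmetric]
      using sum.subset_diff[OF MC finC, of "\<lambda>Z. \<Psi> Z t"] by simp
    have inner: "(\<Sum>Z\<in>{Z\<in>C-M. a \<in> Z \<and> b \<in> Z}. p Z) \<le> N * (F (real (d a b)) * \<xi> (real (d a b)))" for a b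
    proof -
      have "(\<Sum>Z\<in>{Z\<in>C-M. a \<in> Z \<and> b \<in> Z}. p Z) \<le> psi_sum T \<Psi> a b"
        unfolding psi_sum_def p_def
        by (rule finite_sum_le_infsum[OF Psi_summ]) (use finC Cfin pnn0 in \<open>auto simp: p_def\<close>)
      then show ?thesis using psiN[of a b] by linarith
    qed
    have cover: "(\<exists>q\<in>X1 \<times> (\<Lambda> - X). fst q \<in> Z \<and> snd q \<in> Z) \<or> (\<exists>q\<in>X \<times> X2. fst q \<in> Z \<and> snd q \<in> Z)"
      if Z: "Z \<in> C - M" for Z
    proof -
      from Z have ZC: "Z \<subseteq> \<Lambda>" "Z \<inter> X \<noteq> {}" "Z \<inter> (\<Lambda> - X) \<noteq> {}" unfolding C_def by auto
      from Z have "\<not> Z \<subseteq> bdryR d X \<rho>" unfolding M_def MR_def \<rho>_def C_def by auto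
      then obtain w where w: "w \<in> Z" "w \<notin> bdryR d X \<rho>" by blast
      show ?thesis
      proof (cases "w \<in> X")
        case True
        have "setdist d w X \<le> enat 0" using sd_le[OF True, of d w] drefl by simp
        then have "w \<in> outerR d X \<rho>" unfolding outerR_def using zero_enat_def by (auto intro: order_trans)
        then have "w \<in> X1" using w True unfolding X1_def bdryR_def innerR_def dd_def by auto
        moreover obtain y where "y \<in> Z" "y \<in> \<Lambda> - X" using ZC by blast
        ultimately show ?thesis using w by force
      next
        case False
        have "setdist d w (-X) \<le> enat 0" using sd_le[of w "-X" d w] False drefl by simp
        then have "w \<in> innerR d X \<rho>" unfolding innerR_def using zero_enat_def by (auto intro: order_trans)
        then have "w \<in> X2" using w False ZC(1) unfolding X2_def bdryR_def outerR_def by auto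
        moreover obtain x where "x \<in> Z" "x \<in> X" using ZC by blast
        ultimately show ?thesis using w by force
      qed
    qed
    have grpcard: "card {x\<in>A. g x = n} \<le> cb" if A: "A \<subseteq> X" and n: "n \<in> g ` A" for A n
    proof -
      obtain x0 where "x0 \<in> A" "n = g x0" using n by blast
      then have n1: "n \<ge> 1" using ddg A by auto
      have "{x\<in>A. g x = n} \<subseteq> {x. dd x = enat n}" using A ddg by auto
      then have "card {x\<in>A. g x = n} \<le> card {x. dd x = enat n}"
        by (rule card_mono[OF layfin[OF n1]])
      then show ?thesis using laycard'[OF n1] by simp
    qed
    have B1: "(\<Sum>q\<in>X1 \<times> (\<Lambda> - X). \<Sum>Z\<in>{Z\<in>C-M. fst q \<in> Z \<and> snd q \<in> Z}. p Z) \<le> N * nF * (real cb * zeta \<xi> \<rho>)"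
    proof -
      have "(\<Sum>q\<in>X1 \<times> (\<Lambda> - X). \<Sum>Z\<in>{Z\<in>C-M. fst q \<in> Z \<and> snd q \<in> Z}. p Z)
          \<le> (\<Sum>q\<in>X1 \<times> (\<Lambda> - X). N * (F (real (d (fst q) (snd q))) * \<xi> (real (d (fst q) (snd q)))))"
        by (rule sum_mono) (rule inner)
      also have "\<dots> = (\<Sum>z\<in>X1. \<Sum>y\<in>\<Lambda> - X. N * (F (real (d z y)) * \<xi> (real (d z y))))"
        by (simp add: sum.cartesian_product case_prod_beta)
      also have "\<dots> \<le> (\<Sum>z\<in>X1. N * nF * \<xi> (real (g z)))"
      proof (rule sum_mono)
        fix z assume z: "z \<in> X1"
        then have zX: "z \<in> X" unfolding X1_def by simp
        have "(\<Sum>y\<in>\<Lambda> - X. N * (F (real (d z y)) * \<xi> (real (d z y))))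
            \<le> (\<Sum>y\<in>\<Lambda> - X. N * \<xi> (real (g z)) * F (real (d z y)))"
        proof (rule sum_mono)
          fix y assume y: "y \<in> \<Lambda> - X"
          have "enat (g z) \<le> enat (d z y)" using ddg[OF zX] sd_le[of y "-X" d z] y unfolding dd_def by simp
          then have "\<xi> (real (d z y)) \<le> \<xi> (real (g z))" by (intro xi_mono) auto
          then have "F (real (d z y)) * \<xi> (real (d z y)) \<le> F (real (d z y)) * \<xi> (real (g z))"
            using Fnn[of "d z y"] by (intro mult_left_mono) auto
          then have "N * (F (real (d z y)) * \<xi> (real (d z y))) \<le> N * (F (real (d z y)) * \<xi> (real (g z)))"
            using N0 by (rule mult_left_mono)
          then show "N * (F (real (d z y)) * \<xi> (real (d z y))) \<le> N * \<xi> (real (g z)) * F (real (d z y))"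
            by (simp add: mult_ac)
        qed
        also have "\<dots> = N * \<xi> (real (g z)) * (\<Sum>y\<in>\<Lambda> - X. F (real (d z y)))"
          by (simp add: sum_distrib_left)
        also have "\<dots> \<le> N * \<xi> (real (g z)) * nF"
          by (rule mult_left_mono[OF nFb]) (use Lam_fin N0 xinn[of "g z"] in auto)
        finally show "(\<Sum>y\<in>\<Lambda> - X. N * (F (real (d z y)) * \<xi> (real (d z y)))) \<le> N * nF * \<xi> (real (g z))"
          by (simp add: algebra_simps)
      qed
      also have "\<dots> = N * nF * (\<Sum>z\<in>X1. \<xi> (real (g z)))" by (simp add: sum_distrib_left)
      also have "\<dots> \<le> N * nF * (real cb * (\<Sum>n\<in>g ` X1. \<xi> (real n)))"
      proof (rule mult_left_mono)
        show "(\<Sum>z\<in>X1. \<xi> (real (g z))) \<le> real cb * (\<Sum>n\<in>g ` X1. \<xi> (real n))"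
        proof (rule grp)
          show "finite X1" using X_fin by (simp add: X1_def)
          show "card {x\<in>X1. g x = n} \<le> cb" if "n \<in> g ` X1" for n
            by (rule grpcard[OF _ that]) (auto simp: X1_def)
        qed (use xinn in \<open>auto intro: less_imp_le\<close>)
      qed (use N0 nF0 in simp)
      also have "\<dots> \<le> N * nF * (real cb * zeta \<xi> \<rho>)"
      proof (intro mult_left_mono)
        show "(\<Sum>n\<in>g ` X1. \<xi> (real n)) \<le> zeta \<xi> \<rho>"
        proof (rule zb)
          show "finite (g ` X1)" using X_fin by (simp add: X1_def)
          show "g ` X1 \<subseteq> {\<rho> + 1..}"
          proof
            fix n assume "n \<in> g ` X1"
            then obtain z where z: "z \<in> X1" "n = g z" by blast
            then have "\<not> enat (g z) \<le> enat \<rho>" using ddg unfolding X1_def by auto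
            then show "n \<in> {\<rho>+1..}" using z by simp
          qed
        qed
      qed (use N0 nF0 in simp_all)
      finally show ?thesis .
    qed
    have far: "g x + \<rho> \<le> d x z" if x: "x \<in> X" and z: "z \<in> X2" for x z
    proof -
      have zX: "z \<notin> X" using z unfolding X2_def by simp
      have "(x,z) \<in> E ^^ d x z" unfolding d_def by (rule gd_path[OF graph])
      from geo_aux[OF graph this x zX] obtain u v where uv: "u \<in> X" "v \<notin> X" "(u,v) \<in> E"
        "gdist E x u + 1 + gdist E v z \<le> d x z" by blast
      have uv1: "d u v \<le> 1" unfolding d_def by (rule gd_edge[OF uv(3)])
      have duv: "d x u + 1 + d v z \<le> d x z" using uv(4) unfolding d_def .
      have "enat (g x) \<le> enat (d x v)" using ddg[OF x] sd_le[of v "-X" d x] uv(2) unfolding dd_def by simp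
      then have g1: "g x \<le> d x u + 1" using dtri[of x v u] uv1 by simp
      have "setdist d z X \<le> enat (d z u)" by (rule sd_le[OF uv(1)])
      moreover have "enat \<rho> < setdist d z X" using z unfolding X2_def by (auto simp: not_le)
      ultimately have "enat \<rho> < enat (d z u)" by (rule order.strict_trans2[rotated])
      then have "\<rho> < d z u" by simp
      moreover have "d z u \<le> d v z + 1" using dtri[of z u v] dsym[of z v] dsym[of v u] uv1 by simp
      ultimately show ?thesis using g1 duv ddg[OF x] by linarith
    qed
    have B2: "(\<Sum>q\<in>X \<times> X2. \<Sum>Z\<in>{Z\<in>C-M. fst q \<in> Z \<and> snd q \<in> Z}. p Z) \<le> N * nF * (real cb * zeta \<xi> \<rho>)"
    proof -
      have "(\<Sum>q\<in>X \<times> X2. \<Sum>Z\<in>{Z\<in>C-M. fst q \<in> Z \<and> snd q \<in> Z}. p Z)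
          \<le> (\<Sum>q\<in>X \<times> X2. N * (F (real (d (fst q) (snd q))) * \<xi> (real (d (fst q) (snd q)))))"
        by (rule sum_mono) (rule inner)
      also have "\<dots> = (\<Sum>x\<in>X. \<Sum>z\<in>X2. N * (F (real (d x z)) * \<xi> (real (d x z))))"
        by (simp add: sum.cartesian_product case_prod_beta)
      also have "\<dots> \<le> (\<Sum>x\<in>X. N * nF * \<xi> (real (g x + \<rho>)))"
      proof (rule sum_mono)
        fix x assume xX: "x \<in> X"
        have "(\<Sum>z\<in>X2. N * (F (real (d x z)) * \<xi> (real (d x z))))
            \<le> (\<Sum>z\<in>X2. N * \<xi> (real (g x + \<rho>)) * F (real (d x z)))"
        proof (rule sum_mono)
          fix z assume z: "z \<in> X2"
          have "\<xi> (real (d x z)) \<le> \<xi> (real (g x + \<rho>))"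
            using far[OF xX z] by (intro xi_mono) auto
          then have "F (real (d x z)) * \<xi> (real (d x z)) \<le> F (real (d x z)) * \<xi> (real (g x + \<rho>))"
            using Fnn[of "d x z"] by (intro mult_left_mono) auto
          then have "N * (F (real (d x z)) * \<xi> (real (d x z))) \<le> N * (F (real (d x z)) * \<xi> (real (g x + \<rho>)))"
            using N0 by (rule mult_left_mono)
          then show "N * (F (real (d x z)) * \<xi> (real (d x z))) \<le> N * \<xi> (real (g x + \<rho>)) * F (real (d x z))"
            by (simp add: mult_ac)
        qed
        also have "\<dots> = N * \<xi> (real (g x + \<rho>)) * (\<Sum>z\<in>X2. F (real (d x z)))"
          by (simp add: sum_distrib_left)
        also have "\<dots> \<le> N * \<xi> (real (g x + \<rho>)) * nF"
          by (rule mult_left_mono[OF nFb]) (use Lam_fin N0 xinn[of "g x + \<rho>"] in \<open>auto simp: X2_def\<close>)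
        finally show "(\<Sum>z\<in>X2. N * (F (real (d x z)) * \<xi> (real (d x z)))) \<le> N * nF * \<xi> (real (g x + \<rho>))"
          by (simp add: algebra_simps)
      qed
      also have "\<dots> = N * nF * (\<Sum>x\<in>X. \<xi> (real (g x + \<rho>)))" by (simp add: sum_distrib_left)
      also have "\<dots> \<le> N * nF * (real cb * (\<Sum>n\<in>g ` X. \<xi> (real (n + \<rho>))))"
      proof (rule mult_left_mono)
        show "(\<Sum>x\<in>X. \<xi> (real (g x + \<rho>))) \<le> real cb * (\<Sum>n\<in>g ` X. \<xi> (real (n + \<rho>)))"
        proof (rule grp[where h = "\<lambda>n. \<xi> (real (n + \<rho>))"])
          show "finite X" using X_fin .
          show "card {x\<in>X. g x = n} \<le> cb" if "n \<in> g ` X" for n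
            by (rule grpcard[OF _ that]) auto
          show "0 \<le> \<xi> (real (n + \<rho>))" for n using xinn[of "n + \<rho>"] by linarith
        qed
      qed (use N0 nF0 in simp)
      also have "\<dots> \<le> N * nF * (real cb * zeta \<xi> \<rho>)"
      proof (intro mult_left_mono)
        have "(\<Sum>n\<in>g ` X. \<xi> (real (n + \<rho>))) = (\<Sum>m\<in>(\<lambda>n. n + \<rho>) ` g ` X. \<xi> (real m))"
          by (subst sum.reindex) (auto simp: inj_on_def)
        also have "\<dots> \<le> zeta \<xi> \<rho>"
        proof (rule zb)
          show "finite ((\<lambda>n. n + \<rho>) ` g ` X)" using X_fin by simp
          show "(\<lambda>n. n + \<rho>) ` g ` X \<subseteq> {\<rho> + 1..}" using ddg by fastforce
        qed
        finally show "(\<Sum>n\<in>g ` X. \<xi> (real (n + \<rho>))) \<le> zeta \<xi> \<rho>" .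
      qed (use N0 nF0 in simp_all)
      finally show ?thesis .
    qed
    have "norm (K X \<Lambda> \<Psi> t + S d X \<Lambda> \<Psi> R t) \<le> (\<Sum>Z\<in>C - M. norm (\<Psi> Z t))"
      unfolding KS norm_minus_cancel by (rule norm_sum)
    also have "\<dots> \<le> (\<Sum>Z\<in>C - M. p Z)"
      by (rule sum_mono) (use pnn Cfin t in auto)
    also have "\<dots> \<le> (\<Sum>q\<in>X1 \<times> (\<Lambda> - X). \<Sum>Z\<in>{Z\<in>C-M. fst q \<in> Z \<and> snd q \<in> Z}. p Z)
            + (\<Sum>q\<in>X \<times> X2. \<Sum>Z\<in>{Z\<in>C-M. fst q \<in> Z \<and> snd q \<in> Z}. p Z)"
      by (rule dc) (use finC X_fin Lam_fin pnn0 Cfin cover in \<open>auto simp: X1_def X2_def\<close>)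
    also have "\<dots> \<le> 2 * real cb * N * nF * zeta \<xi> \<rho>" using B1 B2 by (simp add: algebra_simps)
    finally show ?thesis .
  qed
  show ?thesis
    unfolding \<rho>_def[symmetric] cb_def[symmetric] N_def[symmetric] nF_def[symmetric]
    by (rule cSUP_least) (use T_pos pw in auto)
qed

end
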